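(* Let $\Gamma$ be an abelian group and $A$ a unital $\Gamma$-graded ring. The following are equivalent: (1) $A$ is a graded right Rickart ring; (2) every graded principal right ideal of $A$ (i.e. every right ideal $xA$ with $x$ homogeneous) is a projective right $A$-module; (3) every graded principal right ideal of $A$ is a graded projective right $A$-module. Consequently, if a $\Gamma$-graded ring $A$ is right Rickart (as an ungraded ring), then it is graded right Rickart.
   Context: A $\Gamma$-graded ring is $A=\bigoplus_{\gamma\in\Gamma}A_\gamma$ with additive subgroups $A_\gamma$ and $A_\gamma A_\delta\subseteq A_{\gamma+\delta}$; elements of $\bigcup_\gamma A_\gamma$ are homogeneous. For $X\subseteq A$, $\operatorname{ann}_r(X)=\{a\in A: xa=0 \ \forall x\in X\}$. A ring is right Rickart if $\operatorname{ann}_r(x)$ is generated as a right ideal by an idempotent for every $x\in A$. A $\Gamma$-graded ring $A$ is graded right Rickart if for every homogeneous $x$, $\operatorname{ann}_r(x)$ is generated as a right ideal by a homogeneous idempotent. A graded right module is $M=\bigoplus_\gamma M_\gamma$ with $M_\gamma A_\delta\subseteq M_{\gamma+\delta}$; a graded projective module is one graded isomorphic to a direct summand of a graded free module (a free module with a homogeneous basis, equivalently a direct sum of shifts $A(\gamma)$, where $M(\delta)_\gamma=M_{\delta+\gamma}$). *)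

theory Defs
  imports Main
begin

definition is_hdecomp :: "('g::ab_group_add \<Rightarrow> 'a::ring_1 set) \<Rightarrow> 'a \<Rightarrow> ('g \<Rightarrow> 'a) \<Rightarrow> bool" where
  "is_hdecomp gr a c \<longleftrightarrow> finite {\<gamma>. c \<gamma> \<noteq> 0} \<and> (\<forall>\<gamma>. c \<gamma> \<in> gr \<gamma>)
      \<and> a = (\<Sum>\<gamma>\<in>{\<gamma>. c \<gamma> \<noteq> 0}. c \<gamma>)"

definition graded_ring :: "('g::ab_group_add \<Rightarrow> 'a::ring_1 set) \<Rightarrow> bool" where
  "graded_ring gr \<longleftrightarrow>
     (\<forall>\<gamma>. 0 \<in> gr \<gamma> \<and> (\<forall>x\<in>gr \<gamma>. \<forall>y\<in>gr \<gamma>. x + y \<in> gr \<gamma> \<and> - x \<in> gr \<gamma>))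
   \<and> (\<forall>\<gamma> \<delta>. \<forall>x\<in>gr \<gamma>. \<forall>y\<in>gr \<delta>. x * y \<in> gr (\<gamma> + \<delta>))
   \<and> (\<forall>a. \<exists>!c. is_hdecomp gr a c)"

definition hcomp :: "('g::ab_group_add \<Rightarrow> 'a::ring_1 set) \<Rightarrow> 'a \<Rightarrow> 'g \<Rightarrow> 'a" where
  "hcomp gr a = (THE c. is_hdecomp gr a c)"

definition homog :: "('g::ab_group_add \<Rightarrow> 'a::ring_1 set) \<Rightarrow> 'a set" where
  "homog gr = (\<Union>\<gamma>. gr \<gamma>)"

definition ann_r :: "'a::ring_1 set \<Rightarrow> 'a set" where
  "ann_r X = {a. \<forall>x\<in>X. x * a = 0}"

definition principal_right_ideal :: "'a::ring_1 \<Rightarrow> 'a set" where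
  "principal_right_ideal x = {x * a | a. True}"

definition right_rickart :: "'a::ring_1 itself \<Rightarrow> bool" where
  "right_rickart _ \<longleftrightarrow>
     (\<forall>x::'a. \<exists>e. e * e = e \<and> ann_r {x} = principal_right_ideal e)"

definition graded_right_rickart :: "('g::ab_group_add \<Rightarrow> 'a::ring_1 set) \<Rightarrow> bool" where
  "graded_right_rickart gr \<longleftrightarrow>
     (\<forall>x\<in>homog gr. \<exists>e\<in>homog gr. e * e = e \<and> ann_r {x} = principal_right_ideal e)"

text \<open>The free right module with basis indexed by I: finitely supported functions
I \<Rightarrow> A (zero outside I), with pointwise addition and right action (f a)(i) = f(i) a.\<close>
definition free_rmod :: "'i set \<Rightarrow> ('i \<Rightarrow> 'a::ring_1) set" where
  "free_rmod I = {f. finite {i. f i \<noteq> 0} \<and> (\<forall>i. i \<notin> I \<longrightarrow> f i = 0)}"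

definition rsubmod :: "('i \<Rightarrow> 'a::ring_1) set \<Rightarrow> bool" where
  "rsubmod C \<longleftrightarrow> (\<lambda>_. 0) \<in> C \<and> (\<forall>f\<in>C. \<forall>g\<in>C. (\<lambda>i. f i + g i) \<in> C) \<and> (\<forall>f\<in>C. (\<lambda>i. - f i) \<in> C)
     \<and> (\<forall>f\<in>C. \<forall>a. (\<lambda>i. f i * a) \<in> C)"

definition rlinear_on :: "'a::ring_1 set \<Rightarrow> ('a \<Rightarrow> 'i \<Rightarrow> 'a) \<Rightarrow> bool" where
  "rlinear_on M \<phi> \<longleftrightarrow> (\<forall>m\<in>M. \<forall>n\<in>M. \<phi> (m + n) = (\<lambda>i. \<phi> m i + \<phi> n i))
     \<and> (\<forall>m\<in>M. \<forall>a. \<phi> (m * a) = (\<lambda>i. \<phi> m i * a))"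

text \<open>M is projective: isomorphic (via phi) to a direct summand of a free module
with basis indexed by a subset of the type 'i.\<close>
definition projective_rideal :: "'i itself \<Rightarrow> 'a::ring_1 set \<Rightarrow> bool" where
  "projective_rideal _ M \<longleftrightarrow>
     (\<exists>(I::'i set) (\<phi>::'a \<Rightarrow> 'i \<Rightarrow> 'a) C.
        rlinear_on M \<phi> \<and> inj_on \<phi> M \<and> \<phi> ` M \<subseteq> free_rmod I
        \<and> rsubmod C \<and> C \<subseteq> free_rmod I
        \<and> \<phi> ` M \<inter> C = {\<lambda>_. 0} \<and> {(\<lambda>i. p i + c i) | p c. p \<in> \<phi> ` M \<and> c \<in> C} = free_rmod I)"

text \<open>Graded free module F = direct sum of shifts A(d i), i in I; its degree delta part
consists of the f with f i in A(d i)_delta = A_(d i + delta).\<close>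
definition gfree_deg :: "('g::ab_group_add \<Rightarrow> 'a::ring_1 set) \<Rightarrow> 'i set \<Rightarrow> ('i \<Rightarrow> 'g) \<Rightarrow> 'g \<Rightarrow> ('i \<Rightarrow> 'a) set" where
  "gfree_deg gr I d \<delta> = {f \<in> free_rmod I. \<forall>i. f i \<in> gr (d i + \<delta>)}"

definition graded_rsubmod :: "('g::ab_group_add \<Rightarrow> 'a::ring_1 set) \<Rightarrow> ('i \<Rightarrow> 'g) \<Rightarrow> ('i \<Rightarrow> 'a) set \<Rightarrow> bool" where
  "graded_rsubmod gr d C \<longleftrightarrow> rsubmod C \<and>
     (\<forall>f\<in>C. \<forall>\<delta>. (\<lambda>i. hcomp gr (f i) (d i + \<delta>)) \<in> C)"

text \<open>M (a graded right ideal, with grading M_delta = M \<inter> A_delta) is graded projective: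
graded isomorphic (phi is bijective onto its image and maps degree delta onto degree delta)
to a graded direct summand of a graded free module.\<close>
definition graded_projective_rideal :: "('g::ab_group_add \<Rightarrow> 'a::ring_1 set) \<Rightarrow> 'i itself \<Rightarrow> 'a set \<Rightarrow> bool" where
  "graded_projective_rideal gr _ M \<longleftrightarrow>
     (\<exists>(I::'i set) (d::'i \<Rightarrow> 'g) (\<phi>::'a \<Rightarrow> 'i \<Rightarrow> 'a) C.
        rlinear_on M \<phi> \<and> inj_on \<phi> M \<and> \<phi> ` M \<subseteq> free_rmod I
        \<and> (\<forall>\<delta>. \<phi> ` (M \<inter> gr \<delta>) = \<phi> ` M \<inter> gfree_deg gr I d \<delta>)
        \<and> graded_rsubmod gr d C \<and> C \<subseteq> free_rmod I
        \<and> \<phi> ` M \<inter> C = {\<lambda>_. 0} \<and> {(\<lambda>i. p i + c i) | p c. p \<in> \<phi> ` M \<and> c \<in> C} = free_rmod I)"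

end

theory Submission
  imports Defs
begin

context
  fixes gr :: "'g::ab_group_add \<Rightarrow> 'a::ring_1 set"
  assumes G: "graded_ring gr"
begin

lemma gr0: "0 \<in> gr \<gamma>" using G unfolding graded_ring_def by blast
lemma gradd: "x \<in> gr \<gamma> \<Longrightarrow> y \<in> gr \<gamma> \<Longrightarrow> x + y \<in> gr \<gamma>" using G unfolding graded_ring_def by blast
lemma grneg: "x \<in> gr \<gamma> \<Longrightarrow> - x \<in> gr \<gamma>" using G unfolding graded_ring_def by blast
lemma grmult: "x \<in> gr \<gamma> \<Longrightarrow> y \<in> gr \<delta> \<Longrightarrow> x * y \<in> gr (\<gamma> + \<delta>)" using G unfolding graded_ring_def by blast

lemma hcomp_decomp: "is_hdecomp gr a (hcomp gr a)"
  using G unfolding graded_ring_def hcomp_def by (metis theI')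

lemma hcomp_unique: "is_hdecomp gr a c \<Longrightarrow> hcomp gr a = c"
  using G unfolding graded_ring_def hcomp_def by (metis the1_equality)

lemma hdecompI:
  assumes "finite S" "\<And>\<gamma>. c \<gamma> \<in> gr \<gamma>" "\<And>\<gamma>. \<gamma> \<notin> S \<Longrightarrow> c \<gamma> = 0" "a = (\<Sum>\<gamma>\<in>S. c \<gamma>)"
  shows "is_hdecomp gr a c"
proof -
  have sub: "{\<gamma>. c \<gamma> \<noteq> 0} \<subseteq> S" using assms(3) by blast
  hence fin: "finite {\<gamma>. c \<gamma> \<noteq> 0}" using assms(1) finite_subset by blast
  have "(\<Sum>\<gamma>\<in>{\<gamma>. c \<gamma> \<noteq> 0}. c \<gamma>) = (\<Sum>\<gamma>\<in>S. c \<gamma>)"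
    by (rule sum.mono_neutral_left[OF assms(1) sub]) auto
  thus ?thesis unfolding is_hdecomp_def using fin assms by auto
qed

lemma hcomp_in: "hcomp gr a \<gamma> \<in> gr \<gamma>"
  using hcomp_decomp unfolding is_hdecomp_def by blast

lemma hcomp_fin: "finite {\<gamma>. hcomp gr a \<gamma> \<noteq> 0}"
  using hcomp_decomp unfolding is_hdecomp_def by blast

lemma hcomp_sum:
  assumes "finite S" "{\<gamma>. hcomp gr a \<gamma> \<noteq> 0} \<subseteq> S"
  shows "a = (\<Sum>\<gamma>\<in>S. hcomp gr a \<gamma>)"
proof -
  have "a = (\<Sum>\<gamma>\<in>{\<gamma>. hcomp gr a \<gamma> \<noteq> 0}. hcomp gr a \<gamma>)"
    using hcomp_decomp unfolding is_hdecomp_def by blast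
  also have "\<dots> = (\<Sum>\<gamma>\<in>S. hcomp gr a \<gamma>)"
    by (rule sum.mono_neutral_left[OF assms(1) assms(2)]) auto
  finally show ?thesis .
qed

lemma hcomp_sum': "(\<Sum>\<gamma>\<in>{\<gamma>. hcomp gr a \<gamma> \<noteq> 0}. hcomp gr a \<gamma>) = a"
  by (rule sym[OF hcomp_sum[OF hcomp_fin order_refl]])

lemma hcomp_homog: "a \<in> gr \<delta> \<Longrightarrow> hcomp gr a = (\<lambda>\<gamma>. if \<gamma> = \<delta> then a else 0)"
  by (rule hcomp_unique, rule hdecompI[where S="{\<delta>}"]) (auto simp: gr0)

lemma hcomp_zero: "hcomp gr 0 \<gamma> = 0"
  using hcomp_homog[OF gr0[of 0]] by simp

lemma hcomp_lmult:
  assumes x: "x \<in> gr \<delta>"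
  shows "hcomp gr (x * a) = (\<lambda>\<gamma>. x * hcomp gr a (\<gamma> - \<delta>))"
proof (rule hcomp_unique)
  let ?T = "{\<gamma>. hcomp gr a \<gamma> \<noteq> 0}"
  show "is_hdecomp gr (x * a) (\<lambda>\<gamma>. x * hcomp gr a (\<gamma> - \<delta>))"
  proof (rule hdecompI[where S="(\<lambda>t. t + \<delta>) ` ?T"])
    show "finite ((\<lambda>t. t + \<delta>) ` ?T)" using hcomp_fin by simp
    fix \<gamma>
    show "x * hcomp gr a (\<gamma> - \<delta>) \<in> gr \<gamma>"
      using grmult[OF x hcomp_in[of a "\<gamma> - \<delta>"]] by simp
    assume "\<gamma> \<notin> (\<lambda>t. t + \<delta>) ` ?T"
    hence "\<gamma> - \<delta> \<notin> ?T" by (metis (no_types, lifting) diff_add_cancel image_eqI)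
    thus "x * hcomp gr a (\<gamma> - \<delta>) = 0" by simp
  next
    have "(\<Sum>\<gamma>\<in>(\<lambda>t. t + \<delta>) ` ?T. x * hcomp gr a (\<gamma> - \<delta>)) = (\<Sum>t\<in>?T. x * hcomp gr a t)"
      by (subst sum.reindex) (auto simp: inj_on_def)
    also have "\<dots> = x * (\<Sum>t\<in>?T. hcomp gr a t)" by (simp add: sum_distrib_left)
    also have "\<dots> = x * a" by (simp add: hcomp_sum')
    finally show "x * a = (\<Sum>\<gamma>\<in>(\<lambda>t. t + \<delta>) ` ?T. x * hcomp gr a (\<gamma> - \<delta>))" by simp
  qed
qed

lemma hcomp_rmult:
  assumes x: "x \<in> gr \<delta>"
  shows "hcomp gr (a * x) = (\<lambda>\<gamma>. hcomp gr a (\<gamma> - \<delta>) * x)"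
proof (rule hcomp_unique)
  let ?T = "{\<gamma>. hcomp gr a \<gamma> \<noteq> 0}"
  show "is_hdecomp gr (a * x) (\<lambda>\<gamma>. hcomp gr a (\<gamma> - \<delta>) * x)"
  proof (rule hdecompI[where S="(\<lambda>t. t + \<delta>) ` ?T"])
    show "finite ((\<lambda>t. t + \<delta>) ` ?T)" using hcomp_fin by simp
    fix \<gamma>
    show "hcomp gr a (\<gamma> - \<delta>) * x \<in> gr \<gamma>"
      using grmult[OF hcomp_in[of a "\<gamma> - \<delta>"] x] by simp
    assume "\<gamma> \<notin> (\<lambda>t. t + \<delta>) ` ?T"
    hence "\<gamma> - \<delta> \<notin> ?T" by (metis (no_types, lifting) diff_add_cancel image_eqI)
    thus "hcomp gr a (\<gamma> - \<delta>) * x = 0" by simp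
  next
    have "(\<Sum>\<gamma>\<in>(\<lambda>t. t + \<delta>) ` ?T. hcomp gr a (\<gamma> - \<delta>) * x) = (\<Sum>t\<in>?T. hcomp gr a t * x)"
      by (subst sum.reindex) (auto simp: inj_on_def)
    also have "\<dots> = (\<Sum>t\<in>?T. hcomp gr a t) * x" by (simp add: sum_distrib_right)
    also have "\<dots> = a * x" by (simp add: hcomp_sum')
    finally show "a * x = (\<Sum>\<gamma>\<in>(\<lambda>t. t + \<delta>) ` ?T. hcomp gr a (\<gamma> - \<delta>) * x)" by simp
  qed
qed

lemma in_gr_if_comps:
  assumes "\<And>\<gamma>. \<gamma> \<noteq> \<gamma>0 \<Longrightarrow> hcomp gr a \<gamma> = 0"
  shows "a \<in> gr \<gamma>0"
proof -
  have "a = (\<Sum>\<gamma>\<in>{\<gamma>0}. hcomp gr a \<gamma>)"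
    by (rule hcomp_sum) (use assms in auto)
  hence "a = hcomp gr a \<gamma>0" by simp
  thus ?thesis by (metis hcomp_in)
qed

lemma one_gr0: "(1::'a) \<in> gr 0"
proof -
  define u where "u = hcomp gr 1 0"
  have hom: "b * u = b" if "b \<in> gr \<delta>" for b \<delta>
  proof -
    have "hcomp gr (b * 1) \<delta> = b * u" using hcomp_lmult[OF that, of 1] by (simp add: u_def)
    moreover have "hcomp gr b \<delta> = b" using hcomp_homog[OF that] by simp
    ultimately show ?thesis by simp
  qed
  let ?T = "{\<gamma>. hcomp gr 1 \<gamma> \<noteq> 0}"
  have "1 * u = (\<Sum>\<gamma>\<in>?T. hcomp gr 1 \<gamma>) * u" by (simp add: hcomp_sum')
  also have "\<dots> = (\<Sum>\<gamma>\<in>?T. hcomp gr 1 \<gamma> * u)" by (simp add: sum_distrib_right)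
  also have "\<dots> = (\<Sum>\<gamma>\<in>?T. hcomp gr 1 \<gamma>)" using hom[OF hcomp_in] by simp
  also have "\<dots> = 1" by (simp add: hcomp_sum')
  finally have "u = 1" by simp
  thus ?thesis using hcomp_in u_def by metis
qed

lemma idem_homogenize:
  assumes ee: "e * e = e" and Rg: "\<And>b \<gamma>. b \<in> principal_right_ideal e \<Longrightarrow> hcomp gr b \<gamma> \<in> principal_right_ideal e"
  shows "\<exists>e0\<in>gr 0. e0 * e0 = e0 \<and> principal_right_ideal e0 = principal_right_ideal e"
proof -
  define e0 where "e0 = hcomp gr e 0"
  have eR: "e \<in> principal_right_ideal e" unfolding principal_right_ideal_def by (rule CollectI, rule exI[of _ 1]) simp
  have fix1: "e * hcomp gr e \<gamma> = hcomp gr e \<gamma>" for \<gamma>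
  proof -
    obtain c where c: "hcomp gr e \<gamma> = e * c" using Rg[OF eR, of \<gamma>] unfolding principal_right_ideal_def by blast
    show ?thesis unfolding c by (simp add: mult.assoc[symmetric] ee)
  qed
  have fix2: "e0 * hcomp gr e \<gamma> = hcomp gr e \<gamma>" for \<gamma>
  proof -
    have "hcomp gr (e * hcomp gr e \<gamma>) \<gamma> = e0 * hcomp gr e \<gamma>"
      using hcomp_rmult[OF hcomp_in[of e \<gamma>], of e] by (simp add: e0_def)
    moreover have "hcomp gr (hcomp gr e \<gamma>) \<gamma> = hcomp gr e \<gamma>"
      using hcomp_homog[OF hcomp_in[of e \<gamma>]] by simp
    ultimately show ?thesis using fix1 by simp
  qed
  let ?T = "{\<gamma>. hcomp gr e \<gamma> \<noteq> 0}"
  have "e0 * e = e0 * (\<Sum>\<gamma>\<in>?T. hcomp gr e \<gamma>)" by (simp add: hcomp_sum')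
  also have "\<dots> = (\<Sum>\<gamma>\<in>?T. e0 * hcomp gr e \<gamma>)" by (simp add: sum_distrib_left)
  also have "\<dots> = e" using fix2 hcomp_sum' by simp
  finally have e0e: "e0 * e = e" .
  obtain c0 where c0: "e0 = e * c0" using Rg[OF eR, of 0] unfolding principal_right_ideal_def e0_def by blast
  have "e0 * e0 = e0" using fix2[of 0] by (simp add: e0_def)
  moreover have "principal_right_ideal e0 = principal_right_ideal e"
    unfolding principal_right_ideal_def
  proof (intro set_eqI iffI)
    fix y assume "y \<in> {e0 * a |a. True}" then obtain a where "y = e0 * a" by blast
    thus "y \<in> {e * a |a. True}" using c0 by (simp add: mult.assoc) blast
  next
    fix y assume "y \<in> {e * a |a. True}" then obtain a where "y = e * a" by blast
    hence "y = e0 * (e * a)" using e0e by (simp add: mult.assoc[symmetric])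
    thus "y \<in> {e0 * a |a. True}" by blast
  qed
  moreover have "e0 \<in> gr 0" using hcomp_in e0_def by simp
  ultimately show ?thesis by blast
qed

lemma ann_graded: "x \<in> gr \<delta> \<Longrightarrow> x * b = 0 \<Longrightarrow> x * hcomp gr b \<gamma> = 0"
  using hcomp_lmult[of x \<delta> b] hcomp_zero by (metis add_diff_cancel)

lemma homog_rickart:
  assumes x: "x \<in> gr \<delta>" and ee: "e * e = e" and ann: "ann_r {x} = principal_right_ideal e"
  shows "\<exists>e0\<in>gr 0. e0 * e0 = e0 \<and> ann_r {x} = principal_right_ideal e0"
proof -
  have "hcomp gr b \<gamma> \<in> principal_right_ideal e" if "b \<in> principal_right_ideal e" for b \<gamma>
    using that ann_graded[OF x] unfolding ann[symmetric] ann_r_def by simp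
  from idem_homogenize[OF ee this] show ?thesis using ann by metis
qed

end

lemma sumC:
  assumes C: "rsubmod C" and S: "finite S"
  shows "(\<forall>i\<in>S. g i \<in> C) \<longrightarrow> (\<lambda>j. \<Sum>i\<in>S. g i j * w i) \<in> C"
  using S
proof (induction S rule: finite_induct)
  case empty thus ?case using C unfolding rsubmod_def by simp
next
  case (insert i S)
  show ?case
  proof
    assume h: "\<forall>k\<in>insert i S. g k \<in> C"
    hence a: "(\<lambda>j. g i j * w i) \<in> C" using C unfolding rsubmod_def by blast
    have b: "(\<lambda>j. \<Sum>i\<in>S. g i j * w i) \<in> C" using insert h by blast
    have cl: "\<forall>f\<in>C. \<forall>g\<in>C. (\<lambda>i. f i + g i) \<in> C" using C unfolding rsubmod_def by blast
    have "(\<lambda>j. g i j * w i + (\<Sum>i\<in>S. g i j * w i)) \<in> C"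
      using cl[rule_format, OF a b] by simp
    thus "(\<lambda>j. \<Sum>i\<in>insert i S. g i j * w i) \<in> C" using insert by simp
  qed
qed

lemma proj_idem:
  fixes x :: "'a::ring_1"
  assumes P: "projective_rideal TYPE('k) (principal_right_ideal x)"
  shows "\<exists>e. e * e = e \<and> ann_r {x} = principal_right_ideal e"
proof -
  define M where "M = principal_right_ideal x"
  obtain I :: "'k set" and \<phi> C where lin: "rlinear_on M \<phi>" and inj: "inj_on \<phi> M"
    and img: "\<phi> ` M \<subseteq> free_rmod I" and C: "rsubmod C" and CF: "C \<subseteq> free_rmod I"
    and cap: "\<phi> ` M \<inter> C = {\<lambda>_. 0}" and sum: "{(\<lambda>i. p i + c i) | p c. p \<in> \<phi> ` M \<and> c \<in> C} = free_rmod I"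
    using P[folded M_def] unfolding projective_rideal_def by (elim exE conjE) (rule that; assumption)
  have Mx: "x * a \<in> M" for a unfolding M_def principal_right_ideal_def by blast
  have xM: "x \<in> M" using Mx[of 1] by simp
  define v where "v = \<phi> x"
  have phx: "\<phi> (x * a) = (\<lambda>j. v j * a)" for a using lin xM unfolding rlinear_on_def v_def by blast
  have ph0: "\<phi> 0 = (\<lambda>_. 0)" using phx[of 0] by simp
  have "\<forall>i\<in>I. \<exists>a c. (\<lambda>j. if j = i then 1 else 0) = (\<lambda>j. v j * a + c j) \<and> c \<in> C"
  proof
    fix i assume i: "i \<in> I"
    have "(\<lambda>j. if j = i then 1 else 0) \<in> free_rmod I"
      unfolding free_rmod_def using i by (auto simp: Collect_conv_if)
    then obtain p c where pc: "(\<lambda>j. if j = i then 1 else 0) = (\<lambda>j. p j + c j)" "p \<in> \<phi> ` M" "c \<in> C"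
      using sum by blast
    then obtain m where "m \<in> M" "p = \<phi> m" by blast
    then obtain a where "p = \<phi> (x * a)" unfolding M_def principal_right_ideal_def by blast
    thus "\<exists>a c. (\<lambda>j. if j = i then 1 else 0) = (\<lambda>j. v j * a + c j) \<and> c \<in> C"
      using pc phx by auto
  qed
  from bchoice[OF this] obtain A where "\<forall>i\<in>I. \<exists>c. (\<lambda>j. if j = i then 1 else 0) = (\<lambda>j. v j * A i + c j) \<and> c \<in> C"
    by blast
  from bchoice[OF this] obtain CC where ACC0: "\<forall>i\<in>I. (\<lambda>j. if j = i then 1 else 0) = (\<lambda>j. v j * A i + CC i j) \<and> CC i \<in> C"
    by blast
  have ACC: "\<And>i. i \<in> I \<Longrightarrow> (\<lambda>j. if j = i then 1 else 0) = (\<lambda>j. v j * A i + CC i j) \<and> CC i \<in> C"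
    using ACC0 by blast
  define S where "S = {i. v i \<noteq> 0}"
  have vF: "v \<in> free_rmod I" using img xM v_def by blast
  have S: "finite S" "S \<subseteq> I" using vF unfolding free_rmod_def S_def by auto
  define u where "u = (\<Sum>i\<in>S. A i * v i)"
  have key: "x * b = x * (u * b)" for b
  proof -
    define c where "c = (\<lambda>j. \<Sum>i\<in>S. CC i j * (v i * b))"
    have CCS: "\<forall>i\<in>S. CC i \<in> C" using ACC S(2) by blast
    have cC: "c \<in> C" unfolding c_def using sumC[OF C S(1), of CC "\<lambda>i. v i * b"] CCS by blast
    have eq: "v j * b = v j * (u * b) + c j" for j
    proof -
      have "(\<Sum>i\<in>S. (if j = i then 1 else 0) * (v i * b)) = (\<Sum>i\<in>S. if j = i then v i * b else 0)"
        by (rule sum.cong) auto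
      also have "\<dots> = (if j \<in> S then v j * b else 0)" using S(1) by (simp add: sum.delta)
      also have "\<dots> = v j * b" by (simp add: S_def)
      finally have 1: "v j * b = (\<Sum>i\<in>S. (if j = i then 1 else 0) * (v i * b))" by simp
      have 2: "(if j = i then 1 else 0) = v j * A i + CC i j" if "i \<in> S" for i
      proof -
        have "i \<in> I" using that S(2) by blast
        from fun_cong[OF conjunct1[OF ACC[OF this]], of j] show ?thesis by simp
      qed
      have "v j * b = (\<Sum>i\<in>S. (v j * A i + CC i j) * (v i * b))"
        unfolding 1 by (rule sum.cong) (simp_all add: 2)
      also have "\<dots> = v j * (u * b) + c j"
        unfolding u_def c_def by (simp add: distrib_right sum.distrib sum_distrib_left sum_distrib_right mult.assoc)
      finally show ?thesis .
    qed
    have "c = \<phi> (x * (b - u * b))" unfolding phx using eq by (auto simp: algebra_simps)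
    hence "c \<in> \<phi> ` M" using Mx by blast
    hence "c = (\<lambda>_. 0)" using cC cap by blast
    hence "\<phi> (x * (b - u * b)) = \<phi> (x * 0)" using \<open>c = \<phi> _\<close> ph0 by simp
    hence "x * (b - u * b) = x * 0" using inj Mx unfolding inj_on_def by blast
    thus ?thesis by (simp add: algebra_simps)
  qed
  have key2: "u * b = 0" if "x * b = 0" for b
  proof -
    have "(\<lambda>j. v j * b) = (\<lambda>_. 0)" using phx[of b] that ph0 by simp
    hence "v j * b = 0" for j by metis
    thus ?thesis unfolding u_def by (simp add: sum_distrib_right mult.assoc)
  qed
  have xu: "x * u = x" using key[of 1] by simp
  have "x * (u - 1) = 0" using xu by (simp add: algebra_simps)
  hence "u * (u - 1) = 0" by (rule key2)
  hence uu: "u * u = u" by (simp add: algebra_simps)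
  define e where "e = 1 - u"
  have "e * e = e" unfolding e_def using uu by (simp add: algebra_simps)
  moreover have "ann_r {x} = principal_right_ideal e"
  proof (intro set_eqI iffI)
    fix b assume "b \<in> ann_r {x}"
    hence "x * b = 0" unfolding ann_r_def by simp
    hence "u * b = 0" by (rule key2)
    hence "b = e * b" unfolding e_def by (simp add: algebra_simps)
    thus "b \<in> principal_right_ideal e" unfolding principal_right_ideal_def by blast
  next
    fix b assume "b \<in> principal_right_ideal e"
    then obtain a where "b = e * a" unfolding principal_right_ideal_def by blast
    hence "x * b = (x * (1 - u)) * a" unfolding e_def by (simp only: mult.assoc)
    thus "b \<in> ann_r {x}" using xu unfolding ann_r_def by (simp add: right_diff_distrib)
  qed
  ultimately show ?thesis by blast
qed


lemma rickart_to_gproj: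
  fixes gr :: "'g::ab_group_add \<Rightarrow> 'a::ring_1 set"
  assumes G: "graded_ring gr" and x: "x \<in> gr \<delta>" and e0: "e \<in> gr 0" and ee: "e * e = e"
    and ann: "ann_r {x} = principal_right_ideal e"
  shows "graded_projective_rideal gr TYPE('k) (principal_right_ideal x)"
proof -
  define M where "M = principal_right_ideal x"
  define i0 :: 'k where "i0 = undefined"
  define f where "f = 1 - e"
  define d :: "'k \<Rightarrow> 'g" where "d = (\<lambda>_. - \<delta>)"
  define \<phi> where "\<phi> = (\<lambda>m i. if i = i0 then f * (SOME a. m = x * a) else 0)"
  define C where "C = {(\<lambda>i. if i = i0 then e * c else 0) | c. True}"
  have Mx: "x * a \<in> M" for a unfolding M_def principal_right_ideal_def by blast
  have Mcases: "\<exists>a. m = x * a" if "m \<in> M" for m using that unfolding M_def principal_right_ideal_def by blast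
  have eR: "e * c \<in> ann_r {x}" for c unfolding ann principal_right_ideal_def by blast
  have xe: "x * e = 0" using eR[of 1] unfolding ann_r_def by simp
  have xf: "x * f = x" unfolding f_def using xe by (simp add: right_diff_distrib)
  have fe: "f * e = 0" unfolding f_def using ee by (simp add: left_diff_distrib)
  have ff: "f * f = f" unfolding f_def using ee by (simp add: algebra_simps)
  have annE: "f * b = 0" if "x * b = 0" for b
  proof -
    have "b \<in> principal_right_ideal e" using that unfolding ann[symmetric] ann_r_def by simp
    then obtain c where "b = e * c" unfolding principal_right_ideal_def by blast
    thus ?thesis using fe by (simp add: mult.assoc[symmetric])
  qed
  have W: "f * a = f * b" if "x * a = x * b" for a b
  proof -
    have "x * (a - b) = 0" using that by (simp add: right_diff_distrib)
    hence "f * (a - b) = 0" by (rule annE)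
    thus ?thesis by (simp add: right_diff_distrib)
  qed
  have phx: "\<phi> (x * a) = (\<lambda>i. if i = i0 then f * a else 0)" for a
  proof -
    have "x * a = x * (SOME a'. x * a = x * a')" by (rule someI) (rule refl)
    hence "f * (SOME a'. x * a = x * a') = f * a" using W by metis
    thus ?thesis unfolding \<phi>_def by auto
  qed
  have fgr: "f \<in> gr 0" unfolding f_def using gradd[OF G one_gr0[OF G] grneg[OF G e0]] by simp
  have deg: "x * a \<in> gr \<delta>' \<longleftrightarrow> f * a \<in> gr (- \<delta> + \<delta>')" for a \<delta>'
  proof
    assume h: "x * a \<in> gr \<delta>'"
    show "f * a \<in> gr (- \<delta> + \<delta>')"
    proof (rule in_gr_if_comps[OF G])
      fix \<gamma> assume ne: "\<gamma> \<noteq> - \<delta> + \<delta>'"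
      have "hcomp gr (x * a) (\<gamma> + \<delta>) = x * hcomp gr a \<gamma>"
        using hcomp_lmult[OF G x, of a] by simp
      moreover have "\<gamma> + \<delta> \<noteq> \<delta>'" using ne by (metis add.commute add_diff_cancel diff_conv_add_uminus)
      ultimately have "x * hcomp gr a \<gamma> = 0" using hcomp_homog[OF G h] by simp
      hence "f * hcomp gr a \<gamma> = 0" by (rule annE)
      thus "hcomp gr (f * a) \<gamma> = 0" using hcomp_lmult[OF G fgr, of a] by simp
    qed
  next
    assume h: "f * a \<in> gr (- \<delta> + \<delta>')"
    have "x * (f * a) \<in> gr (\<delta> + (- \<delta> + \<delta>'))" by (rule grmult[OF G x h])
    thus "x * a \<in> gr \<delta>'" using xf by (simp add: mult.assoc[symmetric])
  qed
  have lin: "rlinear_on M \<phi>"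
    unfolding rlinear_on_def
  proof (intro conjI ballI allI)
    fix m n assume "m \<in> M" "n \<in> M"
    then obtain a b where ab: "m = x * a" "n = x * b" using Mcases by blast
    have 1: "m + n = x * (a + b)" using ab by (simp add: distrib_left)
    show "\<phi> (m + n) = (\<lambda>i. \<phi> m i + \<phi> n i)" unfolding 1 phx using ab by (auto simp: phx distrib_left)
  next
    fix m c assume "m \<in> M"
    then obtain a where a: "m = x * a" using Mcases by blast
    have 1: "m * c = x * (a * c)" using a by (simp add: mult.assoc)
    show "\<phi> (m * c) = (\<lambda>i. \<phi> m i * c)" unfolding 1 phx using a by (auto simp: phx mult.assoc)
  qed
  have inj: "inj_on \<phi> M"
  proof (rule inj_onI)
    fix m n assume "m \<in> M" "n \<in> M" and eq: "\<phi> m = \<phi> n"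
    then obtain a b where ab: "m = x * a" "n = x * b" using Mcases by blast
    have "f * a = f * b" using fun_cong[OF eq, of i0] ab phx by simp
    hence "x * (f * a) = x * (f * b)" by simp
    thus "m = n" using ab xf by (simp add: mult.assoc[symmetric])
  qed
  have phiF: "(\<lambda>i. if i = i0 then y else 0) \<in> free_rmod {i0}" for y :: 'a
  proof -
    have "{i. (if i = i0 then y else 0) \<noteq> 0} \<subseteq> {i0}" by auto
    hence "finite {i. (if i = i0 then y else 0) \<noteq> 0}" by (rule finite_subset) simp
    thus ?thesis unfolding free_rmod_def by auto
  qed
  have img: "\<phi> ` M \<subseteq> free_rmod {i0}"
  proof
    fix p assume "p \<in> \<phi> ` M"
    then obtain a where "p = \<phi> (x * a)" using Mcases by blast
    thus "p \<in> free_rmod {i0}" using phx phiF by simp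
  qed
  have grad: "\<phi> ` (M \<inter> gr \<delta>') = \<phi> ` M \<inter> gfree_deg gr {i0} d \<delta>'" for \<delta>'
  proof (intro set_eqI iffI)
    fix p assume "p \<in> \<phi> ` (M \<inter> gr \<delta>')"
    then obtain m where m: "m \<in> M" "m \<in> gr \<delta>'" "p = \<phi> m" by blast
    then obtain a where a: "m = x * a" using Mcases by blast
    have "f * a \<in> gr (- \<delta> + \<delta>')" using deg m(2) a by simp
    hence "p \<in> gfree_deg gr {i0} d \<delta>'" unfolding gfree_deg_def d_def using m(3) a phx phiF gr0[OF G]
      by auto
    thus "p \<in> \<phi> ` M \<inter> gfree_deg gr {i0} d \<delta>'" using m by blast
  next
    fix p assume p: "p \<in> \<phi> ` M \<inter> gfree_deg gr {i0} d \<delta>'"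
    then obtain m where m: "m \<in> M" "p = \<phi> m" by blast
    then obtain a where a: "m = x * a" using Mcases by blast
    have "p i0 \<in> gr (d i0 + \<delta>')" using p unfolding gfree_deg_def by blast
    hence "f * a \<in> gr (- \<delta> + \<delta>')" using m(2) a phx d_def by simp
    hence "m \<in> gr \<delta>'" using deg a by simp
    thus "p \<in> \<phi> ` (M \<inter> gr \<delta>')" using m by blast
  qed
  have Cel: "(\<lambda>i. if i = i0 then e * c else 0) \<in> C" for c unfolding C_def by blast
  have Ccases: "\<exists>c. g = (\<lambda>i. if i = i0 then e * c else 0)" if "g \<in> C" for g
    using that unfolding C_def by blast
  have rsub: "rsubmod C"
    unfolding rsubmod_def
  proof (intro conjI ballI allI)
    show "(\<lambda>_. 0) \<in> C" using Cel[of 0] by (simp add: if_distrib cong: if_cong)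
  next
    fix g h assume "g \<in> C" "h \<in> C"
    then obtain c c' where "g = (\<lambda>i. if i = i0 then e * c else 0)" "h = (\<lambda>i. if i = i0 then e * c' else 0)"
      using Ccases by blast
    moreover have "(\<lambda>i. (if i = i0 then e * c else 0) + (if i = i0 then e * c' else 0)) = (\<lambda>i. if i = i0 then e * (c + c') else 0)"
      by (auto simp: distrib_left)
    ultimately show "(\<lambda>i. g i + h i) \<in> C" using Cel by simp
  next
    fix g assume "g \<in> C"
    then obtain c where "g = (\<lambda>i. if i = i0 then e * c else 0)" using Ccases by blast
    moreover have "(\<lambda>i. - (if i = i0 then e * c else 0)) = (\<lambda>i. if i = i0 then e * (- c) else 0)"
      by auto
    ultimately show "(\<lambda>i. - g i) \<in> C" using Cel by simp
  next
    fix g a assume "g \<in> C"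
    then obtain c where "g = (\<lambda>i. if i = i0 then e * c else 0)" using Ccases by blast
    moreover have "(\<lambda>i. (if i = i0 then e * c else 0) * a) = (\<lambda>i. if i = i0 then e * (c * a) else 0)"
      by (auto simp: mult.assoc)
    ultimately show "(\<lambda>i. g i * a) \<in> C" using Cel by simp
  qed
  have gsub: "graded_rsubmod gr d C"
    unfolding graded_rsubmod_def
  proof (intro conjI ballI allI rsub)
    fix g \<delta>' assume "g \<in> C"
    then obtain c where c: "g = (\<lambda>i. if i = i0 then e * c else 0)" using Ccases by blast
    have "(\<lambda>i. hcomp gr (g i) (d i + \<delta>')) = (\<lambda>i. if i = i0 then e * hcomp gr c (- \<delta> + \<delta>') else 0)"
      using hcomp_lmult[OF G e0, of c] hcomp_zero[OF G] by (auto simp: c d_def)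
    thus "(\<lambda>i. hcomp gr (g i) (d i + \<delta>')) \<in> C" using Cel by simp
  qed
  have CF: "C \<subseteq> free_rmod {i0}" using Ccases phiF by blast
  have cap: "\<phi> ` M \<inter> C = {\<lambda>_. 0}"
  proof (intro set_eqI iffI)
    fix p assume "p \<in> \<phi> ` M \<inter> C"
    then obtain a c where a: "p = \<phi> (x * a)" and c: "p = (\<lambda>i. if i = i0 then e * c else 0)"
      using Mcases Ccases by blast
    have "f * a = e * c" using fun_cong[OF c, of i0] a phx by simp
    hence "f * (f * a) = f * (e * c)" by simp
    hence "f * a = 0" using ff fe by (simp add: mult.assoc[symmetric])
    thus "p \<in> {\<lambda>_. 0}" using a phx by auto
  next
    fix p :: "'k \<Rightarrow> 'a" assume "p \<in> {\<lambda>_. 0}"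
    hence p: "p = (\<lambda>_. 0)" by simp
    have "p = \<phi> (x * 0)" using phx[of 0] p by auto
    moreover have "p = (\<lambda>i. if i = i0 then e * 0 else 0)" using p by auto
    ultimately show "p \<in> \<phi> ` M \<inter> C" using Mx[of 0] Cel[of 0] by (metis IntI image_eqI)
  qed
  have sum: "{(\<lambda>i. p i + c i) | p c. p \<in> \<phi> ` M \<and> c \<in> C} = free_rmod {i0}"
  proof (intro set_eqI iffI)
    fix g assume "g \<in> {(\<lambda>i. p i + c i) | p c. p \<in> \<phi> ` M \<and> c \<in> C}"
    then obtain p c where g: "g = (\<lambda>i. p i + c i)" "p \<in> \<phi> ` M" "c \<in> C" by blast
    then obtain a c' where "p = \<phi> (x * a)" "c = (\<lambda>i. if i = i0 then e * c' else 0)"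
      using Mcases Ccases by blast
    hence "g = (\<lambda>i. if i = i0 then f * a + e * c' else 0)" using g phx by auto
    thus "g \<in> free_rmod {i0}" using phiF by simp
  next
    fix g :: "'k \<Rightarrow> 'a" assume g: "g \<in> free_rmod {i0}"
    define y where "y = g i0"
    have gy: "g = (\<lambda>i. if i = i0 then f * y + e * y else 0)"
      using g unfolding free_rmod_def y_def f_def by (auto simp: algebra_simps)
    have "g = (\<lambda>i. \<phi> (x * y) i + (\<lambda>i. if i = i0 then e * y else 0) i)"
      unfolding gy phx by auto
    moreover have "\<phi> (x * y) \<in> \<phi> ` M" using Mx by blast
    ultimately show "g \<in> {(\<lambda>i. p i + c i) | p c. p \<in> \<phi> ` M \<and> c \<in> C}"
      using Cel[of y] by (intro CollectI exI[of _ "\<phi> (x * y)"] exI[of _ "\<lambda>i. if i = i0 then e * y else 0"]) simp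
  qed
  show ?thesis unfolding graded_projective_rideal_def M_def[symmetric]
    using lin inj img grad gsub CF cap sum by blast
qed

lemma gproj_proj:
  "graded_projective_rideal gr TYPE('k) M \<Longrightarrow> projective_rideal TYPE('k) M"
  unfolding graded_projective_rideal_def projective_rideal_def graded_rsubmod_def by blast


lemma gr_to_gproj:
  fixes gr :: "'g::ab_group_add \<Rightarrow> 'a::ring_1 set"
  assumes G: "graded_ring gr" and R: "graded_right_rickart gr"
  shows "\<forall>x\<in>homog gr. graded_projective_rideal gr TYPE('k) (principal_right_ideal x)"
proof
  fix x assume "x \<in> homog gr"
  then obtain \<delta> where x: "x \<in> gr \<delta>" unfolding homog_def by blast
  obtain e where "e * e = e" "ann_r {x} = principal_right_ideal e"
    using R \<open>x \<in> homog gr\<close> unfolding graded_right_rickart_def by blast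
  from homog_rickart[OF G x this] obtain e0 where "e0 \<in> gr 0" "e0 * e0 = e0" "ann_r {x} = principal_right_ideal e0"
    by blast
  from rickart_to_gproj[OF G x this] show "graded_projective_rideal gr TYPE('k) (principal_right_ideal x)" .
qed

lemma proj_to_gr:
  fixes gr :: "'g::ab_group_add \<Rightarrow> 'a::ring_1 set"
  assumes G: "graded_ring gr" and P: "\<forall>x\<in>homog gr. projective_rideal TYPE('k) (principal_right_ideal x)"
  shows "graded_right_rickart gr"
  unfolding graded_right_rickart_def
proof
  fix x assume xh: "x \<in> homog gr"
  then obtain \<delta> where x: "x \<in> gr \<delta>" unfolding homog_def by blast
  obtain e where "e * e = e" "ann_r {x} = principal_right_ideal e"
    using proj_idem P xh by blast
  from homog_rickart[OF G x this] obtain e0 where "e0 \<in> gr 0" "e0 * e0 = e0" "ann_r {x} = principal_right_ideal e0"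
    by blast
  thus "\<exists>e\<in>homog gr. e * e = e \<and> ann_r {x} = principal_right_ideal e" unfolding homog_def by blast
qed

lemma rr_to_gr:
  fixes gr :: "'g::ab_group_add \<Rightarrow> 'a::ring_1 set"
  assumes G: "graded_ring gr" and R: "right_rickart TYPE('a)"
  shows "graded_right_rickart gr"
  unfolding graded_right_rickart_def
proof
  fix x assume xh: "x \<in> homog gr"
  then obtain \<delta> where x: "x \<in> gr \<delta>" unfolding homog_def by blast
  obtain e where "e * e = e" "ann_r {x} = principal_right_ideal e"
    using R unfolding right_rickart_def by blast
  from homog_rickart[OF G x this] obtain e0 where "e0 \<in> gr 0" "e0 * e0 = e0" "ann_r {x} = principal_right_ideal e0"
    by blast
  thus "\<exists>e\<in>homog gr. e * e = e \<and> ann_r {x} = principal_right_ideal e" unfolding homog_def by blast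
qed

theorem mainTheorem1:
  fixes gr :: "'g::ab_group_add \<Rightarrow> 'a::ring_1 set"
  assumes "graded_ring gr"
  shows "(graded_right_rickart gr \<longleftrightarrow>
            (\<forall>x\<in>homog gr. projective_rideal TYPE('i) (principal_right_ideal x)))
       \<and> (graded_right_rickart gr \<longleftrightarrow>
            (\<forall>x\<in>homog gr. graded_projective_rideal gr TYPE('j) (principal_right_ideal x)))
       \<and> (right_rickart TYPE('a) \<longrightarrow> graded_right_rickart gr)"
proof (intro conjI iffI impI)
  assume "graded_right_rickart gr"
  thus "\<forall>x\<in>homog gr. projective_rideal TYPE('i) (principal_right_ideal x)"
    using gr_to_gproj[OF assms, where 'k='i] gproj_proj by blast
next
  assume "\<forall>x\<in>homog gr. projective_rideal TYPE('i) (principal_right_ideal x)"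
  thus "graded_right_rickart gr" using proj_to_gr[OF assms] by blast
next
  assume "graded_right_rickart gr"
  thus "\<forall>x\<in>homog gr. graded_projective_rideal gr TYPE('j) (principal_right_ideal x)"
    using gr_to_gproj[OF assms] by blast
next
  assume "\<forall>x\<in>homog gr. graded_projective_rideal gr TYPE('j) (principal_right_ideal x)"
  hence "\<forall>x\<in>homog gr. projective_rideal TYPE('j) (principal_right_ideal x)" using gproj_proj by blast
  thus "graded_right_rickart gr" using proj_to_gr[OF assms] by blast
next
  assume "right_rickart TYPE('a)"
  thus "graded_right_rickart gr" using rr_to_gr[OF assms] by blast
qed

end
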